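(* Let $(A_C,\mathcal R_A)$ be an autocatalytic core of a CRN. Then its stoichiometric matrix $\overline{\mathbb S}=(\mathbb S)_{A_C}^{\mathcal R_A}$ is a minimal semi-positive matrix.
   Context: A chemical reaction network (CRN) consists of a finite species set $\mathcal S$ and a finite set $\mathcal R$ of reactions; each reaction $r$ is written $r^-\to r^+$ with input complex $r^-\in\mathbb Z_{\ge0}^{\mathcal S}$ and output complex $r^+\in\mathbb Z_{\ge0}^{\mathcal S}$. The input and output matrices $\mathbb S^-,\mathbb S^+$ are the $\mathcal S\times\mathcal R$ matrices whose column indexed by $r$ is $r^-$, resp. $r^+$; the stoichiometric matrix is $\mathbb S=\mathbb S^+-\mathbb S^-$. For a matrix $\mathbb A$ with rows indexed by $\mathcal S$ and columns by $\mathcal R$ and subsets $M\subseteq\mathcal S$, $N\subseteq\mathcal R$, $(\mathbb A)_M^N$ is the submatrix with rows in $M$ and columns in $N$. For a vector $\mathbf v$: $\mathbf v\gg\mathbf 0$ means all entries are $>0$; $\mathbf v>\mathbf 0$ (semi-positive) means all entries are $\ge0$ and $\mathbf v\ne\mathbf 0$. A motif is a pair $(\mathcal M,\mathcal R')$ with $\mathcal M\subseteq\mathcal S$, $\mathcal R'\subseteq\mathcal R$. It is exclusively autocatalytic if: (i) there is $\mathbf v\in\mathbb R^{\mathcal R'}$, $\mathbf v\gg\mathbf0$, with $(\mathbb S)_{\mathcal M}^{\mathcal R'}\mathbf v\gg\mathbf 0$; (ii) every row of $(\mathbb S^-)_{\mathcal M}^{\mathcal R'}$ is semi-positive; (iii)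 every column of $(\mathbb S^-)_{\mathcal M}^{\mathcal R'}$ is semi-positive. An autocatalytic core is an exclusively autocatalytic motif $(A_C,\mathcal R_A)$ such that no motif $(\mathcal M',\mathcal R'')\neq(A_C,\mathcal R_A)$ with $\mathcal M'\subseteq A_C$ and $\mathcal R''\subseteq\mathcal R_A$ is exclusively autocatalytic. A real matrix $\mathbb A$ is semi-positive if there is $\mathbf v\gg\mathbf 0$ with $\mathbb A\mathbf v\gg\mathbf0$; it is minimal semi-positive if it is semi-positive and no matrix obtained from $\mathbb A$ by deleting one or more columns is semi-positive. *)

theory Defs
  imports Complex_Main
begin

text \<open>A CRN: species set S, reaction set R (both finite), with input complexes
  inp r and output complexes out r (vectors in Z_{>=0}^S, as functions 's => nat).\<close>

definition stoich :: "('r \<Rightarrow> 's \<Rightarrow> nat) \<Rightarrow> ('r \<Rightarrow> 's \<Rightarrow> nat) \<Rightarrow> 's \<Rightarrow> 'r \<Rightarrow> real" where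
  "stoich inp out s r = real (out r s) - real (inp r s)"

definition semipositive_mat :: "('i \<Rightarrow> 'j \<Rightarrow> real) \<Rightarrow> 'i set \<Rightarrow> 'j set \<Rightarrow> bool" where
  "semipositive_mat A I J \<longleftrightarrow>
     (\<exists>v :: 'j \<Rightarrow> real. (\<forall>j\<in>J. v j > 0) \<and> (\<forall>i\<in>I. (\<Sum>j\<in>J. A i j * v j) > 0))"

definition minimal_semipositive_mat :: "('i \<Rightarrow> 'j \<Rightarrow> real) \<Rightarrow> 'i set \<Rightarrow> 'j set \<Rightarrow> bool" where
  "minimal_semipositive_mat A I J \<longleftrightarrow>
     semipositive_mat A I J \<and> (\<forall>J'. J' \<subset> J \<longrightarrow> \<not> semipositive_mat A I J')"

definition excl_autocatalytic ::
  "'s set \<Rightarrow> 'r set \<Rightarrow> ('r \<Rightarrow> 's \<Rightarrow> nat) \<Rightarrow> ('r \<Rightarrow> 's \<Rightarrow> nat) \<Rightarrow> 's set \<Rightarrow> 'r set \<Rightarrow> bool" where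
  "excl_autocatalytic S R inp out M R' \<longleftrightarrow>
     M \<subseteq> S \<and> R' \<subseteq> R \<and> M \<noteq> {} \<and> R' \<noteq> {} \<and>
     semipositive_mat (stoich inp out) M R' \<and>
     (\<forall>s\<in>M. \<exists>r\<in>R'. inp r s \<noteq> 0) \<and>
     (\<forall>r\<in>R'. \<exists>s\<in>M. inp r s \<noteq> 0)"

definition autocatalytic_core ::
  "'s set \<Rightarrow> 'r set \<Rightarrow> ('r \<Rightarrow> 's \<Rightarrow> nat) \<Rightarrow> ('r \<Rightarrow> 's \<Rightarrow> nat) \<Rightarrow> 's set \<Rightarrow> 'r set \<Rightarrow> bool" where
  "autocatalytic_core S R inp out A RA \<longleftrightarrow>
     excl_autocatalytic S R inp out A RA \<and>
     (\<forall>M' R''. M' \<subseteq> A \<and> R'' \<subseteq> RA \<and> (M', R'') \<noteq> (A, RA) \<longrightarrow>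
        \<not> excl_autocatalytic S R inp out M' R'')"

end

theory Submission
  imports Defs
begin

theorem mainTheorem4:
  fixes S :: "'s set" and R :: "'r set" and inp out :: "'r \<Rightarrow> 's \<Rightarrow> nat"
    and A :: "'s set" and RA :: "'r set"
  assumes "finite S" and "finite R"
    and "autocatalytic_core S R inp out A RA"
  shows "minimal_semipositive_mat (stoich inp out) A RA"
proof -
  have ex: "excl_autocatalytic S R inp out A RA"
    and core: "\<And>M' R''. M' \<subseteq> A \<Longrightarrow> R'' \<subseteq> RA \<Longrightarrow> (M', R'') \<noteq> (A, RA) \<Longrightarrow>
        \<not> excl_autocatalytic S R inp out M' R''"
    using assms(3) unfolding autocatalytic_core_def by blast+
  have AS: "A \<subseteq> S" and RR: "RA \<subseteq> R" and An: "A \<noteq> {}" and sp: "semipositive_mat (stoich inp out) A RA"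
    and col: "\<forall>r\<in>RA. \<exists>s\<in>A. inp r s \<noteq> 0"
    using ex unfolding excl_autocatalytic_def by blast+
  have "\<not> semipositive_mat (stoich inp out) A J'" if J': "J' \<subset> RA" for J'
  proof
    assume spJ: "semipositive_mat (stoich inp out) A J'"
    then obtain v where vpos: "\<forall>j\<in>J'. v j > 0"
      and vA: "\<forall>i\<in>A. (\<Sum>j\<in>J'. stoich inp out i j * v j) > 0"
      unfolding semipositive_mat_def by blast
    have Jn: "J' \<noteq> {}"
    proof
      assume "J' = {}"
      with vA An show False by auto
    qed
    define M' where "M' = {s\<in>A. \<exists>r\<in>J'. inp r s \<noteq> 0}"
    have M'A: "M' \<subseteq> A" unfolding M'_def by auto
    have colJ: "\<forall>r\<in>J'. \<exists>s\<in>M'. inp r s \<noteq> 0"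
      using col J' unfolding M'_def by blast
    have M'n: "M' \<noteq> {}" using colJ Jn by blast
    have spM: "semipositive_mat (stoich inp out) M' J'"
      unfolding semipositive_mat_def using vpos vA M'A by blast
    have "excl_autocatalytic S R inp out M' J'"
      unfolding excl_autocatalytic_def
      using M'A AS J' RR M'n Jn spM colJ unfolding M'_def by blast
    moreover have "(M', J') \<noteq> (A, RA)" using J' by auto
    ultimately show False using core M'A J' by blast
  qed
  then show ?thesis unfolding minimal_semipositive_mat_def using sp by blast
qed

end
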